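(* Let $G$ be a finite group with identity $e$, $R[G]$ its real group algebra, and $S=\{x\in R[G]: \sum_g x_g=1,\ x_g\ge0\ \forall g\}$. Let $(p^{[n]}(t))_{n\in\mathbb N}$, $p^{[n]}(t)=\sum_{k=0}^\infty a_k^{[n]}t^k$, be any sequence of real power series with $\sum_{k=0}^\infty|a_k^{[n]}|<\infty$ for every $n$ and $\lim_{n\to\infty}\sup_{k\ge1}|a_k^{[n]}|=0$. Let $x\in S$ with $n_{xc_x}=n_x$. (1) If $c_x\neq e$, then $\lim_{n\to\infty}p^{[n]}(x)$ exists if and only if $\lim_{n\to\infty}a_0^{[n]}$ exists and $\lim_{n\to\infty}\sum_{k=0}^\infty a^{[n]}_{km_x+r}$ exists for every $0\le r<m_x$. (2) If $c_x=e$, then $\lim_{n\to\infty}p^{[n]}(x)$ exists if and only if $\lim_{n\to\infty}\sum_{k=0}^\infty a^{[n]}_{km_x+r}$ exists for every $0\le r<m_x$. When the limit exists, $$\lim_{n\to\infty}p^{[n]}(x)=c_x\sum_{r=0}^{m_x-1}x^r\lim_{n\to\infty}\sum_{k=0}^\infty a^{[n]}_{km_x+r}+(e-c_x)\lim_{n\to\infty}a_0^{[n]}.$$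
   Context: Here $(p^{[n]})$ is an arbitrary sequence (not necessarily iterates). For $y\in S$, $p^{[n]}(y)=a_0^{[n]}e+\sum_{k\ge1}a_k^{[n]}y^k$ (convergent). $\mathrm{Supp}(y)=\{g: y_g\ne0\}$, $\mathbb N=\{1,2,\dots\}$, Euclidean topology on $R[G]$. For $y\in S$: $n_y=\min\{k\in\mathbb N:(y^k)_e\ne0\}$; $G_y$ is the subgroup generated by $\mathrm{Supp}(y^{n_y})$; $c_y=\frac1{|G_y|}\sum_{g\in G_y}g$; $m_y=\min\{k\in\mathbb N: \mathrm{Supp}(y^k)\subset G_y\}$. Note $xc_x\in S$, so $n_{xc_x}$ is defined. *)

theory Defs
  imports "HOL-Analysis.Analysis"
begin

text \<open>Real group algebra R[G] of a finite group G (written additively, identity 0),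
  elements are functions G \<Rightarrow> real; the topology is the product topology
  (Function_Topology), which is the Euclidean topology since G is finite.\<close>

definition ga_unit :: "'g::{group_add,finite} \<Rightarrow> real" where
  "ga_unit = (\<lambda>h. if h = 0 then 1 else 0)"

definition ga_mult :: "('g::{group_add,finite} \<Rightarrow> real) \<Rightarrow> ('g \<Rightarrow> real) \<Rightarrow> ('g \<Rightarrow> real)" where
  "ga_mult x y = (\<lambda>h. \<Sum>g\<in>UNIV. x g * y (- g + h))"

primrec ga_pow :: "('g::{group_add,finite} \<Rightarrow> real) \<Rightarrow> nat \<Rightarrow> ('g \<Rightarrow> real)" where
  "ga_pow y 0 = ga_unit"
| "ga_pow y (Suc k) = ga_mult y (ga_pow y k)"

definition simplex_S :: "('g::{group_add,finite} \<Rightarrow> real) set" where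
  "simplex_S = {x. (\<Sum>g\<in>UNIV. x g) = 1 \<and> (\<forall>g. x g \<ge> 0)}"

definition Supp :: "('g \<Rightarrow> real) \<Rightarrow> 'g set" where
  "Supp y = {g. y g \<noteq> 0}"

definition gen_subgroup :: "'g::group_add set \<Rightarrow> 'g set" where
  "gen_subgroup A = \<Inter>{H. A \<subseteq> H \<and> 0 \<in> H \<and> (\<forall>a\<in>H. \<forall>b\<in>H. a + b \<in> H) \<and> (\<forall>a\<in>H. - a \<in> H)}"

definition n_of :: "('g::{group_add,finite} \<Rightarrow> real) \<Rightarrow> nat" where
  "n_of y = (LEAST k. 1 \<le> k \<and> ga_pow y k 0 \<noteq> 0)"

definition G_of :: "('g::{group_add,finite} \<Rightarrow> real) \<Rightarrow> 'g set" where
  "G_of y = gen_subgroup (Supp (ga_pow y (n_of y)))"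

definition c_of :: "('g::{group_add,finite} \<Rightarrow> real) \<Rightarrow> ('g \<Rightarrow> real)" where
  "c_of y = (\<lambda>h. if h \<in> G_of y then 1 / real (card (G_of y)) else 0)"

definition m_of :: "('g::{group_add,finite} \<Rightarrow> real) \<Rightarrow> nat" where
  "m_of y = (LEAST k. 1 \<le> k \<and> Supp (ga_pow y k) \<subseteq> G_of y)"

definition pser_eval :: "(nat \<Rightarrow> real) \<Rightarrow> ('g::{group_add,finite} \<Rightarrow> real) \<Rightarrow> ('g \<Rightarrow> real)" where
  "pser_eval a y = (\<lambda>h. a 0 * ga_unit h + (\<Sum>k. a (Suc k) * ga_pow y (Suc k) h))"

end

theory Submission
  imports Defs
begin

lemma sum_shift_left:
  fixes f :: "'g::{group_add,finite} \<Rightarrow> 'b::comm_monoid_add"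
  shows "(\<Sum>g\<in>UNIV. f (a + g)) = (\<Sum>g\<in>UNIV. f g)"
  by (rule sum.reindex_bij_witness[of _ "\<lambda>g. -a + g" "\<lambda>g. a + g"]) (auto simp: add.assoc[symmetric])

lemma sum_shift_inv:
  fixes f :: "'g::{group_add,finite} \<Rightarrow> 'b::comm_monoid_add"
  shows "(\<Sum>g\<in>UNIV. f (h + - g)) = (\<Sum>g\<in>UNIV. f g)"
  by (rule sum.reindex_bij_witness[of _ "\<lambda>g. - g + h" "\<lambda>g. h + - g"])
     (auto simp: add.assoc[symmetric] minus_add)

lemma sum_shift_neg:
  fixes f :: "'g::{group_add,finite} \<Rightarrow> 'b::comm_monoid_add"
  shows "(\<Sum>g\<in>UNIV. f (- g + h)) = (\<Sum>g\<in>UNIV. f g)"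
  by (rule sum.reindex_bij_witness[of _ "\<lambda>g. h + - g" "\<lambda>g. - g + h"])
     (auto simp: add.assoc[symmetric] minus_add)

lemma ga_mult_alt:
  "ga_mult x y h = (\<Sum>b\<in>UNIV. x (h + - b) * y b)"
proof -
  have "ga_mult x y h = (\<Sum>g\<in>UNIV. x g * y (- g + h))" by (simp add: ga_mult_def)
  also have "\<dots> = (\<Sum>b\<in>UNIV. x (h + - b) * y (- (h + - b) + h))"
    by (rule sum_shift_inv[symmetric])
  also have "\<dots> = (\<Sum>b\<in>UNIV. x (h + - b) * y b)"
    by (simp add: minus_add add.assoc)
  finally show ?thesis .
qed

lemma ga_mult_assoc: "ga_mult (ga_mult x y) z = ga_mult x (ga_mult y z)"
proof
  fix h
  have "ga_mult (ga_mult x y) z h = (\<Sum>g\<in>UNIV. \<Sum>a\<in>UNIV. x a * y (- a + g) * z (- g + h))"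
    by (simp add: ga_mult_def sum_distrib_right)
  also have "\<dots> = (\<Sum>a\<in>UNIV. \<Sum>g\<in>UNIV. x a * y (- a + g) * z (- g + h))"
    by (rule sum.swap)
  also have "\<dots> = (\<Sum>a\<in>UNIV. \<Sum>b\<in>UNIV. x a * y (- a + (a + b)) * z (- (a + b) + h))"
    by (rule sum.cong[OF refl], rule sum_shift_left[symmetric])
  also have "\<dots> = (\<Sum>a\<in>UNIV. \<Sum>b\<in>UNIV. x a * (y b * z (- b + (- a + h))))"
    by (simp add: add.assoc[symmetric] minus_add mult.assoc)
  also have "\<dots> = ga_mult x (ga_mult y z) h"
    by (simp add: ga_mult_def sum_distrib_left)
  finally show "ga_mult (ga_mult x y) z h = ga_mult x (ga_mult y z) h" .
qed

lemma ga_unit_left[simp]: "ga_mult ga_unit y = y"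
proof
  fix h
  have "ga_mult ga_unit y h = (\<Sum>g\<in>UNIV. if g = 0 then y (- g + h) else 0)"
    unfolding ga_mult_def ga_unit_def by (rule sum.cong) auto
  then show "ga_mult ga_unit y h = y h" by simp
qed

lemma ga_unit_right[simp]: "ga_mult y ga_unit = y"
proof
  fix h
  have "ga_mult y ga_unit h = (\<Sum>b\<in>UNIV. y (h + - b) * ga_unit b)" by (rule ga_mult_alt)
  also have "\<dots> = (\<Sum>b\<in>UNIV. if b = 0 then y (h + - b) else 0)"
    unfolding ga_unit_def by (rule sum.cong) auto
  also have "\<dots> = y h" by simp
  finally show "ga_mult y ga_unit h = y h" .
qed

lemma ga_mult_diff_left: "ga_mult (x - y) z = ga_mult x z - ga_mult y z"
  by (rule ext) (simp add: ga_mult_def left_diff_distrib sum_subtractf)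

lemma ga_mult_diff_right: "ga_mult z (x - y) = ga_mult z x - ga_mult z y"
  by (rule ext) (simp add: ga_mult_def right_diff_distrib sum_subtractf)

lemma ga_mult_add_left: "ga_mult (\<lambda>g. x g + y g) z = (\<lambda>h. ga_mult x z h + ga_mult y z h)"
  by (rule ext) (simp add: ga_mult_def distrib_right sum.distrib)

lemma ga_mult_add_right: "ga_mult z (\<lambda>g. x g + y g) = (\<lambda>h. ga_mult z x h + ga_mult z y h)"
  by (rule ext) (simp add: ga_mult_def distrib_left sum.distrib)

lemma ga_mult_scale_left: "ga_mult (\<lambda>g. t * x g) z = (\<lambda>h. t * ga_mult x z h)"
  by (rule ext) (simp add: ga_mult_def sum_distrib_left mult.assoc)

lemma ga_mult_scale_right: "ga_mult z (\<lambda>g. t * x g) = (\<lambda>h. t * ga_mult z x h)"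
  by (rule ext) (simp add: ga_mult_def sum_distrib_left mult.left_commute)

lemma ga_mult_sum_right:
  "ga_mult z (\<lambda>g. \<Sum>r\<in>A. f r g * t r) h = (\<Sum>r\<in>A. ga_mult z (f r) h * t r)"
proof -
  have "ga_mult z (\<lambda>g. \<Sum>r\<in>A. f r g * t r) h = (\<Sum>g\<in>UNIV. \<Sum>r\<in>A. z g * f r (- g + h) * t r)"
    by (simp add: ga_mult_def sum_distrib_left mult.assoc)
  also have "\<dots> = (\<Sum>r\<in>A. \<Sum>g\<in>UNIV. z g * f r (- g + h) * t r)"
    by (rule sum.swap)
  also have "\<dots> = (\<Sum>r\<in>A. ga_mult z (f r) h * t r)"
    by (simp add: ga_mult_def sum_distrib_right)
  finally show ?thesis .
qed

lemma ga_pow_add: "ga_pow x (i + j) = ga_mult (ga_pow x i) (ga_pow x j)"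
  by (induction i) (simp_all add: ga_mult_assoc)

lemma ga_pow_mult: "ga_pow x (i * j) = ga_pow (ga_pow x i) j"
  by (induction j) (simp_all add: ga_pow_add)

lemma ga_mult_sum: "(\<Sum>h\<in>UNIV. ga_mult x y h) = (\<Sum>g\<in>UNIV. x g) * (\<Sum>g\<in>UNIV. y g)"
proof -
  have "(\<Sum>h\<in>UNIV. ga_mult x y h) = (\<Sum>g\<in>UNIV. \<Sum>h\<in>UNIV. x g * y (- g + h))"
    unfolding ga_mult_def by (rule sum.swap)
  also have "\<dots> = (\<Sum>g\<in>UNIV. x g * (\<Sum>h\<in>UNIV. y h))"
    by (simp add: sum_distrib_left[symmetric] sum_shift_left)
  finally show ?thesis by (simp add: sum_distrib_right)
qed

lemma ga_mult_nonneg: "(\<And>g. x g \<ge> 0) \<Longrightarrow> (\<And>g. y g \<ge> 0) \<Longrightarrow> ga_mult x y h \<ge> 0"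
  by (simp add: ga_mult_def sum_nonneg)

definition prob :: "('g::{group_add,finite} \<Rightarrow> real) \<Rightarrow> bool" where
  "prob z \<longleftrightarrow> (\<forall>g. z g \<ge> 0) \<and> (\<Sum>g\<in>UNIV. z g) = 1"

lemma prob_unit: "prob ga_unit"
  by (simp add: prob_def ga_unit_def)

lemma prob_mult: "prob x \<Longrightarrow> prob y \<Longrightarrow> prob (ga_mult x y)"
  by (simp add: prob_def ga_mult_sum ga_mult_nonneg)

lemma prob_pow: "prob x \<Longrightarrow> prob (ga_pow x k)"
  by (induction k) (simp_all add: prob_unit prob_mult)

lemma prob_le1: "prob x \<Longrightarrow> x g \<le> 1"
  unfolding prob_def
  by (metis UNIV_I finite_class.finite_UNIV member_le_sum)

lemma bound_mult_prob:
  assumes "\<And>g. \<bar>D g\<bar> \<le> B" "prob z"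
  shows "\<bar>ga_mult D z h\<bar> \<le> B"
proof -
  have "\<bar>ga_mult D z h\<bar> \<le> (\<Sum>g\<in>UNIV. \<bar>D g * z (- g + h)\<bar>)"
    unfolding ga_mult_def by (rule sum_abs)
  also have "\<dots> \<le> (\<Sum>g\<in>UNIV. B * z (- g + h))"
    using assms unfolding prob_def
    by (intro sum_mono) (simp add: abs_mult mult_right_mono)
  also have "\<dots> = B * (\<Sum>g\<in>UNIV. z (- g + h))" by (simp add: sum_distrib_left)
  also have "(\<Sum>g\<in>UNIV. z (- g + h)) = 1"
    using assms(2) unfolding prob_def by (simp add: sum_shift_neg)
  finally show ?thesis by simp
qed

definition ssum :: "'g::group_add set \<Rightarrow> 'g set \<Rightarrow> 'g set" where
  "ssum A B = {a + b | a b. a \<in> A \<and> b \<in> B}"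

primrec spow :: "'g::group_add set \<Rightarrow> nat \<Rightarrow> 'g set" where
  "spow A 0 = {0}"
| "spow A (Suc j) = ssum A (spow A j)"

lemma Supp_unit: "Supp ga_unit = {0}"
  by (auto simp: Supp_def ga_unit_def)

lemma Supp_mult:
  assumes "\<And>g. x g \<ge> 0" "\<And>g. y g \<ge> 0"
  shows "Supp (ga_mult x y) = ssum (Supp x) (Supp y)"
proof (intro set_eqI iffI)
  fix h assume "h \<in> Supp (ga_mult x y)"
  then have "(\<Sum>g\<in>UNIV. x g * y (- g + h)) \<noteq> 0" by (simp add: Supp_def ga_mult_def)
  then obtain g where "x g * y (- g + h) \<noteq> 0" by (meson sum.neutral)
  then have "x g \<noteq> 0" "y (- g + h) \<noteq> 0" by auto
  moreover have "h = g + (- g + h)" by (simp add: add.assoc[symmetric])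
  ultimately show "h \<in> ssum (Supp x) (Supp y)" unfolding ssum_def Supp_def by blast
next
  fix h assume "h \<in> ssum (Supp x) (Supp y)"
  then obtain a b where ab: "h = a + b" "x a \<noteq> 0" "y b \<noteq> 0" by (auto simp: ssum_def Supp_def)
  have "- a + h = b" using ab by (simp add: add.assoc[symmetric])
  then have pos: "x a * y (- a + h) > 0" using ab assms
    by (metis less_eq_real_def mult_pos_pos)
  have "x a * y (- a + h) \<le> (\<Sum>g\<in>UNIV. x g * y (- g + h))"
    by (rule member_le_sum) (auto intro: mult_nonneg_nonneg assms)
  with pos show "h \<in> Supp (ga_mult x y)" by (auto simp: Supp_def ga_mult_def)
qed

lemma Supp_mult_sub: "Supp (ga_mult x y) \<subseteq> ssum (Supp x) (Supp y)"
proof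
  fix h assume "h \<in> Supp (ga_mult x y)"
  then have "(\<Sum>g\<in>UNIV. x g * y (- g + h)) \<noteq> 0" by (simp add: Supp_def ga_mult_def)
  then obtain g where "x g * y (- g + h) \<noteq> 0" by (meson sum.neutral)
  then have "x g \<noteq> 0" "y (- g + h) \<noteq> 0" by auto
  moreover have "h = g + (- g + h)" by (simp add: add.assoc[symmetric])
  ultimately show "h \<in> ssum (Supp x) (Supp y)" unfolding ssum_def Supp_def by blast
qed

lemma pow_nonneg: "(\<And>g. x g \<ge> 0) \<Longrightarrow> ga_pow x k g \<ge> 0"
  by (induction k arbitrary: g) (auto simp: ga_unit_def ga_mult_def intro!: sum_nonneg mult_nonneg_nonneg)

lemma Supp_pow:
  assumes "\<And>g. x g \<ge> 0"
  shows "Supp (ga_pow x k) = spow (Supp x) k"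
proof (induction k)
  case 0 then show ?case by (simp add: Supp_unit)
next
  case (Suc k)
  have "\<And>g. ga_pow x k g \<ge> 0" by (rule pow_nonneg[OF assms])
  then show ?case using Suc by (simp add: Supp_mult assms)
qed

lemma spow_add: "a \<in> spow A i \<Longrightarrow> b \<in> spow A j \<Longrightarrow> a + b \<in> spow A (i + j)"
proof (induction i arbitrary: a)
  case 0 then show ?case by simp
next
  case (Suc i)
  then obtain s c where "a = s + c" "s \<in> A" "c \<in> spow A i" by (auto simp: ssum_def)
  have cb: "c + b \<in> spow A (i + j)" using Suc.IH[of c] Suc.prems(2) \<open>c \<in> spow A i\<close> by blast
  have "a + b = s + (c + b)" using \<open>a = s + c\<close> by (simp add: add.assoc)
  then have "\<exists>a' b'. a + b = a' + b' \<and> a' \<in> A \<and> b' \<in> spow A (i + j)"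
    using cb \<open>s \<in> A\<close> by blast
  then show ?case by (simp add: ssum_def)
qed

lemma spow_nonempty: "A \<noteq> {} \<Longrightarrow> spow A j \<noteq> {}"
proof (induction j)
  case 0 then show ?case by simp
next
  case (Suc j)
  then obtain a b where "a \<in> A" "b \<in> spow A j" by blast
  then have "a + b \<in> spow A (Suc j)" by (auto simp: ssum_def)
  then show ?case by blast
qed

lemma spow_mono_zero: "0 \<in> A \<Longrightarrow> spow A j \<subseteq> spow A (Suc j)"
proof
  fix u assume "0 \<in> A" "u \<in> spow A j"
  then have "\<exists>a' b'. u = a' + b' \<and> a' \<in> A \<and> b' \<in> spow A j"
    by (metis add_0)
  then show "u \<in> spow A (Suc j)" by (simp add: ssum_def)
qed

lemma funpow_plus: "(((+) a) ^^ p) b = (((+) a) ^^ p) 0 + (b::'g::group_add)"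
  by (induction p) (simp_all add: add.assoc)

lemma finite_order:
  fixes a :: "'g::{group_add,finite}"
  shows "\<exists>p\<ge>1. (((+) a) ^^ p) 0 = 0"
proof -
  have "\<not> inj (\<lambda>j::nat. (((+) a) ^^ j) 0)"
  proof
    assume "inj (\<lambda>j::nat. (((+) a) ^^ j) 0)"
    then have "infinite (range (\<lambda>j::nat. (((+) a) ^^ j) 0))"
      using finite_imageD infinite_UNIV_nat by blast
    then show False by simp
  qed
  then obtain i j :: nat where ij: "i \<noteq> j" "(((+) a) ^^ i) 0 = (((+) a) ^^ j) 0"
    unfolding inj_def by blast
  have key: "\<exists>p\<ge>1. (((+) a) ^^ p) 0 = 0" if "i < j" "(((+) a) ^^ i) 0 = (((+) a) ^^ j) 0" for i j
  proof -
    have "(((+) a) ^^ ((j - i) + i)) 0 = (((+) a) ^^ (j - i)) ((((+) a) ^^ i) 0)"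
      by (simp add: funpow_add)
    then have "(((+) a) ^^ j) 0 = (((+) a) ^^ (j - i)) ((((+) a) ^^ i) 0)"
      using that(1) by simp
    also have "\<dots> = (((+) a) ^^ (j - i)) 0 + (((+) a) ^^ i) 0" by (rule funpow_plus)
    finally have "(((+) a) ^^ (j - i)) 0 + (((+) a) ^^ i) 0 = 0 + (((+) a) ^^ i) 0"
      using that(2) by simp
    then have "(((+) a) ^^ (j - i)) 0 = 0" by (rule add_right_imp_eq)
    then show ?thesis using that(1) by (intro exI[of _ "j - i"]) auto
  qed
  show ?thesis
  proof (cases "i < j")
    case True then show ?thesis using key ij(2) by blast
  next
    case False then have "j < i" using ij(1) by simp
    then show ?thesis using key[of j i] ij(2) by simp
  qed
qed

lemma funpow_in_spow: "a \<in> A \<Longrightarrow> (((+) a) ^^ p) 0 \<in> spow A p"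
  by (induction p) (auto simp: ssum_def)

lemma neg_in_closed:
  fixes a :: "'g::{group_add,finite}"
  assumes "0 \<in> H" "\<And>u v. u \<in> H \<Longrightarrow> v \<in> H \<Longrightarrow> u + v \<in> H" "a \<in> H"
  shows "- a \<in> H"
proof -
  obtain p where p: "p \<ge> 1" "(((+) a) ^^ p) 0 = 0" using finite_order by blast
  have inH: "(((+) a) ^^ q) 0 \<in> H" for q
    by (induction q) (auto intro: assms)
  have "(((+) a) ^^ p) 0 = a + (((+) a) ^^ (p - 1)) 0"
    using p(1) by (cases p) auto
  then have "- a = (((+) a) ^^ (p - 1)) 0" using p(2)
    by (metis add_minus_cancel add.right_neutral)
  then show ?thesis using inH by simp
qed

definition closed_sg :: "'g::group_add set \<Rightarrow> bool" where
  "closed_sg H \<longleftrightarrow> 0 \<in> H \<and> (\<forall>a\<in>H. \<forall>b\<in>H. a + b \<in> H) \<and> (\<forall>a\<in>H. - a \<in> H)"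

lemma gen_subgroup_eq: "gen_subgroup A = \<Inter>{H. A \<subseteq> H \<and> closed_sg H}"
  unfolding gen_subgroup_def closed_sg_def by simp

lemma gen_subgroup_sub: "A \<subseteq> gen_subgroup A"
  unfolding gen_subgroup_eq by (rule Inter_greatest) simp
lemma gen_subgroup_zero: "0 \<in> gen_subgroup A"
  unfolding gen_subgroup_eq by (rule InterI) (simp add: closed_sg_def)
lemma gen_subgroup_add:
  assumes "u \<in> gen_subgroup A" "v \<in> gen_subgroup A" shows "u + v \<in> gen_subgroup A"
  unfolding gen_subgroup_eq
proof (rule InterI)
  fix X assume X: "X \<in> {H. A \<subseteq> H \<and> closed_sg H}"
  then have "u \<in> X" "v \<in> X" using assms unfolding gen_subgroup_eq by blast+
  then show "u + v \<in> X" using X by (simp add: closed_sg_def)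
qed
lemma gen_subgroup_neg:
  assumes "u \<in> gen_subgroup A" shows "- u \<in> gen_subgroup A"
  unfolding gen_subgroup_eq
proof (rule InterI)
  fix X assume X: "X \<in> {H. A \<subseteq> H \<and> closed_sg H}"
  then have "u \<in> X" using assms unfolding gen_subgroup_eq by blast
  then show "- u \<in> X" using X by (simp add: closed_sg_def)
qed

lemma gen_subgroup_min:
  fixes A :: "'g::group_add set"
  assumes "A \<subseteq> H" "0 \<in> H" "\<And>u v. u \<in> H \<Longrightarrow> v \<in> H \<Longrightarrow> u + v \<in> H" "\<And>u. u \<in> H \<Longrightarrow> - u \<in> H"
  shows "gen_subgroup A \<subseteq> H"
proof -
  have "H \<in> {H. A \<subseteq> H \<and> closed_sg H}" using assms by (simp add: closed_sg_def)
  then show ?thesis unfolding gen_subgroup_eq by (rule Inter_lower)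
qed

lemma prob_nonneg: "prob z \<Longrightarrow> z g \<ge> 0" by (simp add: prob_def)

lemma prob_Supp_ne: "prob z \<Longrightarrow> Supp z \<noteq> {}"
proof
  assume "prob z" "Supp z = {}"
  then have "\<And>g. z g = 0" by (auto simp: Supp_def)
  then have "(\<Sum>g\<in>UNIV. z g) = 0" by simp
  with \<open>prob z\<close> show False by (simp add: prob_def)
qed

locale walk =
  fixes x :: "'g::{group_add,finite} \<Rightarrow> real"
  assumes px: "prob x"
begin

abbreviation "S \<equiv> Supp x"
abbreviation "nn \<equiv> n_of x"
abbreviation "K \<equiv> G_of x"
abbreviation "c \<equiv> c_of x"
abbreviation "mm \<equiv> m_of x"

lemma x_nonneg: "x g \<ge> 0" using px by (simp add: prob_def)

lemma S_ne: "S \<noteq> {}" using px by (rule prob_Supp_ne)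

lemma Supp_xpow: "Supp (ga_pow x k) = spow S k"
  by (rule Supp_pow) (rule x_nonneg)

lemma n_exists: "\<exists>k. 1 \<le> k \<and> ga_pow x k 0 \<noteq> 0"
proof -
  obtain s where s: "s \<in> S" using S_ne by blast
  obtain p where p: "p \<ge> 1" "(((+) s) ^^ p) 0 = 0" using finite_order by blast
  have "0 \<in> spow S p" using funpow_in_spow[OF s, of p] p(2) by simp
  then have "ga_pow x p 0 \<noteq> 0" using Supp_xpow[of p] by (auto simp: Supp_def)
  then show ?thesis using p(1) by blast
qed

lemma n_pos: "1 \<le> nn" and n_val: "ga_pow x nn 0 \<noteq> 0"
  using LeastI_ex[OF n_exists] unfolding n_of_def by auto

lemma n_min: "1 \<le> k \<Longrightarrow> k < nn \<Longrightarrow> ga_pow x k 0 = 0"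
  using not_less_Least[of k "\<lambda>k. 1 \<le> k \<and> ga_pow x k 0 \<noteq> 0"] unfolding n_of_def by auto

lemma K_def': "K = gen_subgroup (spow S nn)"
  unfolding G_of_def Supp_xpow ..

lemma SnK: "spow S nn \<subseteq> K" unfolding K_def' by (rule gen_subgroup_sub)
lemma K0: "0 \<in> K" unfolding K_def' by (rule gen_subgroup_zero)
lemma Kadd: "u \<in> K \<Longrightarrow> v \<in> K \<Longrightarrow> u + v \<in> K" unfolding K_def' by (rule gen_subgroup_add)
lemma Kneg: "u \<in> K \<Longrightarrow> - u \<in> K" unfolding K_def' by (rule gen_subgroup_neg)

lemma Kadd_iff: assumes "u \<in> K" shows "(u + v \<in> K) = (v \<in> K)"
proof
  assume "u + v \<in> K"
  then have "- u + (u + v) \<in> K" using Kadd[OF Kneg[OF assms]] by blast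
  then show "v \<in> K" by (simp add: add.assoc[symmetric])
qed (rule Kadd[OF assms])
lemma Kadd_iff2: assumes "v \<in> K" shows "(u + v \<in> K) = (u \<in> K)"
proof
  assume "u + v \<in> K"
  then have "(u + v) + - v \<in> K" using Kadd Kneg[OF assms] by blast
  then show "u \<in> K" by (simp add: add.assoc)
qed (rule Kadd[OF _ assms])

lemma KNE: "K \<noteq> {}" using K0 by blast
lemma finK: "finite K" by (rule finite)
lemma cardK: "card K \<ge> 1"
proof -
  have "card K > 0" using KNE finK by (simp add: card_gt_0_iff)
  then show ?thesis by simp
qed

lemma c_eq: "c g = (if g \<in> K then 1 / real (card K) else 0)"
  by (simp add: c_of_def)

lemma prob_c: "prob c"
proof -
  have "(\<Sum>g\<in>UNIV. c g) = (\<Sum>g\<in>K. 1 / real (card K))"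
    by (simp add: c_eq sum.If_cases)
  also have "\<dots> = 1" using cardK by (simp add: KNE finK)
  finally show ?thesis by (simp add: prob_def c_eq)
qed

lemma Supp_c: "Supp c = K"
  by (auto simp: Supp_def c_eq)

lemma c_mult_left:
  assumes "Supp u \<subseteq> K"
  shows "ga_mult c u = (\<lambda>h. (\<Sum>g\<in>UNIV. u g) * c h)"
proof
  fix h
  have "ga_mult c u h = (\<Sum>b\<in>UNIV. c (h + - b) * u b)" by (rule ga_mult_alt)
  also have "\<dots> = (\<Sum>b\<in>UNIV. c h * u b)"
  proof (rule sum.cong[OF refl])
    fix b show "c (h + - b) * u b = c h * u b"
    proof (cases "b \<in> K")
      case True
      then have "(h + - b \<in> K) = (h \<in> K)" using Kadd_iff2 Kneg by blast
      then show ?thesis by (simp add: c_eq)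
    next
      case False then have "u b = 0" using assms by (auto simp: Supp_def)
      then show ?thesis by simp
    qed
  qed
  also have "\<dots> = c h * (\<Sum>g\<in>UNIV. u g)"
    by (rule sum_distrib_left[symmetric])
  also have "\<dots> = (\<Sum>g\<in>UNIV. u g) * c h"
    by (rule mult.commute)
  finally show "ga_mult c u h = (\<Sum>g\<in>UNIV. u g) * c h" .
qed

lemma c_mult_right:
  assumes "Supp u \<subseteq> K"
  shows "ga_mult u c = (\<lambda>h. (\<Sum>g\<in>UNIV. u g) * c h)"
proof
  fix h
  have "ga_mult u c h = (\<Sum>g\<in>UNIV. u g * c (- g + h))" by (simp add: ga_mult_def)
  also have "\<dots> = (\<Sum>g\<in>UNIV. u g * c h)"
  proof (rule sum.cong[OF refl])
    fix g show "u g * c (- g + h) = u g * c h"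
    proof (cases "g \<in> K")
      case True
      then have "(- g + h \<in> K) = (h \<in> K)" using Kadd_iff Kneg by blast
      then show ?thesis by (simp add: c_eq)
    next
      case False then have "u g = 0" using assms by (auto simp: Supp_def)
      then show ?thesis by simp
    qed
  qed
  finally show "ga_mult u c h = (\<Sum>g\<in>UNIV. u g) * c h"
    by (simp add: sum_distrib_right)
qed

lemma c_left_inv:
  assumes "k \<in> K"
  shows "ga_mult c z (k + h) = ga_mult c z h"
proof -
  have "ga_mult c z (k + h) = (\<Sum>b\<in>UNIV. c (k + h + - b) * z b)" by (rule ga_mult_alt)
  also have "\<dots> = (\<Sum>b\<in>UNIV. c (h + - b) * z b)"
  proof (rule sum.cong[OF refl])
    fix b
    have eq: "k + h + - b = k + (h + - b)" by (rule add.assoc)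
    have "c (k + h + - b) = c (h + - b)"
      by (simp only: eq c_eq Kadd_iff[OF assms])
    then show "c (k + h + - b) * z b = c (h + - b) * z b" by simp
  qed
  also have "\<dots> = ga_mult c z h" by (rule ga_mult_alt[symmetric])
  finally show ?thesis .
qed

lemma m_exists: "1 \<le> nn \<and> Supp (ga_pow x nn) \<subseteq> K"
  using n_pos SnK Supp_xpow by simp

lemma m_prop: "1 \<le> mm \<and> Supp (ga_pow x mm) \<subseteq> K"
  unfolding m_of_def by (rule LeastI[of _ nn]) (rule m_exists)

lemma m_pos: "1 \<le> mm" using m_prop by blast
lemma m_sub: "spow S mm \<subseteq> K" using m_prop by (simp only: Supp_xpow)

lemma m_le_n: "mm \<le> nn"
  unfolding m_of_def by (rule Least_le) (rule m_exists)

lemma c_unit_iff: "c = ga_unit \<longleftrightarrow> K = {0}"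
proof
  assume "c = ga_unit"
  then have "c 0 = 1" by (simp add: ga_unit_def)
  then have "1 / real (card K) = 1" using K0 by (simp only: c_eq if_True)
  then have "card K = 1" by (simp add: divide_eq_1_iff)
  then obtain a where "K = {a}" by (rule card_1_singletonE)
  then show "K = {0}" using K0 by simp
next
  assume K: "K = {0}"
  show "c = ga_unit"
  proof
    fix g show "c g = ga_unit g" unfolding c_eq K by (simp add: ga_unit_def)
  qed
qed

end

locale walk2 = walk +
  assumes nx: "n_of (ga_mult x (c_of x)) = n_of x"
begin

abbreviation "xc \<equiv> ga_mult x c"

lemma c_nonneg: "c g \<ge> 0" using prob_c by (simp add: prob_def)

lemma xc_nonneg: "xc g \<ge> 0"
  by (rule ga_mult_nonneg) (simp_all add: x_nonneg c_nonneg)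

lemma Supp_xc: "Supp xc = ssum S K"
  using Supp_mult[of x c] x_nonneg c_nonneg Supp_c by simp

lemma Supp_xcpow: "Supp (ga_pow xc j) = spow (ssum S K) j"
  using Supp_pow[of xc j] xc_nonneg Supp_xc by simp

lemma spowSK: "b \<in> spow S (Suc j) \<Longrightarrow> k \<in> K \<Longrightarrow> b + k \<in> spow (ssum S K) (Suc j)"
proof (induction j arbitrary: b)
  case 0
  then obtain s where s: "b = s + 0" "s \<in> S" by (auto simp: ssum_def)
  then have "s + k \<in> ssum S K" using 0 by (auto simp: ssum_def)
  moreover have "b + k = (s + k) + 0" using s by simp
  ultimately show ?case by (auto simp: ssum_def)
next
  case (Suc j)
  then obtain s b' where sb: "b = s + b'" "s \<in> S" "b' \<in> spow S (Suc j)"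
    by (simp only: spow.simps(2)[of S "Suc j"] ssum_def mem_Collect_eq) blast
  have "s + 0 \<in> ssum S K" unfolding ssum_def using sb(2) K0 by blast
  moreover have "b' + k \<in> spow (ssum S K) (Suc j)" using Suc.IH[OF sb(3) Suc.prems(2)] .
  moreover have "b + k = (s + 0) + (b' + k)" using sb by (simp add: add.assoc)
  ultimately have "\<exists>a' b''. b + k = a' + b'' \<and> a' \<in> ssum S K \<and> b'' \<in> spow (ssum S K) (Suc j)"
    by blast
  then show ?case by (simp add: ssum_def)
qed

lemma xc_min: "1 \<le> j \<Longrightarrow> j < nn \<Longrightarrow> 0 \<notin> spow (ssum S K) j"
proof -
  assume j: "1 \<le> j" "j < nn"
  have "ga_pow xc j 0 = 0"
    using not_less_Least[of j "\<lambda>k. 1 \<le> k \<and> ga_pow xc k 0 \<noteq> 0"] nx j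
    unfolding n_of_def by auto
  then show ?thesis using Supp_xcpow[of j] by (auto simp: Supp_def)
qed

lemma m_eq_n: "mm = nn"
proof -
  obtain b where b: "b \<in> spow S mm" using spow_nonempty[OF S_ne, of mm] by blast
  then have bK: "b \<in> K" using m_sub by blast
  have mS: "mm = Suc (mm - 1)" using m_pos by simp
  have "b + - b \<in> spow (ssum S K) mm"
    using spowSK[of b "mm - 1" "- b"] b bK Kneg mS by simp
  then have "0 \<in> spow (ssum S K) mm" by simp
  then have "ga_pow xc mm 0 \<noteq> 0" using Supp_xcpow[of mm] by (auto simp: Supp_def)
  then have "n_of xc \<le> mm" unfolding n_of_def using m_pos by (intro Least_le) simp
  then show ?thesis using nx m_le_n by simp
qed

lemma disjoint:
  assumes rr: "r < r'" "r' < nn"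
  shows "ssum K (spow S r) \<inter> ssum K (spow S r') = {}"
proof (rule ccontr)
  assume "ssum K (spow S r) \<inter> ssum K (spow S r') \<noteq> {}"
  then obtain k1 a k2 b where kab: "k1 \<in> K" "a \<in> spow S r" "k2 \<in> K" "b \<in> spow S r'" "k1 + a = k2 + b"
    by (auto simp: ssum_def)
  obtain d where d: "d \<in> spow S (nn - r')" using spow_nonempty[OF S_ne] by blast
  have "b + d \<in> spow S (r' + (nn - r'))" by (rule spow_add[OF kab(4) d])
  then have bdK: "b + d \<in> K" using rr SnK by auto
  have ad: "a + d \<in> spow S (r + (nn - r'))" by (rule spow_add[OF kab(2) d])
  have "a = - k1 + (k2 + b)" using kab(5) by (metis add_minus_cancel)
  then have "a + d = (- k1 + k2) + (b + d)" by (simp add: add.assoc)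
  then have adK: "a + d \<in> K" using Kadd Kneg kab(1,3) bdK by metis
  define j where "j = r + (nn - r')"
  have j: "1 \<le> j" "j < nn" using rr unfolding j_def by auto
  have jS: "Suc (j - 1) = j" using j by simp
  have "a + d \<in> spow S (Suc (j - 1))" using ad unfolding j_def[symmetric] by (simp only: jS)
  from spowSK[OF this Kneg[OF adK]]
  have "0 \<in> spow (ssum S K) (Suc (j - 1))" by (simp only: right_minus)
  then have "0 \<in> spow (ssum S K) j" by (simp only: jS)
  with xc_min[OF j] show False by blast
qed

lemma Supp_cxr: "Supp (ga_mult c (ga_pow x r)) = ssum K (spow S r)"
proof -
  have "\<And>g. ga_pow x r g \<ge> 0" by (rule pow_nonneg) (rule x_nonneg)
  then show ?thesis using Supp_mult[of c "ga_pow x r"] c_nonneg Supp_c Supp_xpow by simp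
qed

end

lemma spow_mono: "0 \<in> A \<Longrightarrow> i \<le> j \<Longrightarrow> spow A i \<subseteq> spow A j"
  by (rule lift_Suc_mono_le[of "spow A", OF spow_mono_zero])

lemma spow_stab:
  fixes A :: "'g::{group_add,finite} set"
  assumes "0 \<in> A" shows "\<exists>j. spow A (Suc j) = spow A j"
proof (rule ccontr)
  assume "\<not> ?thesis"
  then have ps: "spow A j \<subset> spow A (Suc j)" for j using spow_mono_zero[OF assms, of j] by blast
  have cj: "card (spow A j) \<ge> j + 1" for j
  proof (induction j)
    case 0 then show ?case by simp
  next
    case (Suc j)
    have "card (spow A j) < card (spow A (Suc j))" by (rule psubset_card_mono[OF finite ps])
    then show ?case using Suc.IH by simp
  qed
  have "card (spow A (CARD('g))) \<le> CARD('g)" by (rule card_mono) auto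
  with cj[of "CARD('g)"] show False by simp
qed

lemma spow_stab_all:
  assumes "spow A (Suc j) = spow A j" "j \<le> i"
  shows "spow A i = spow A j"
  using assms(2)
proof (induction i rule: dec_induct)
  case base then show ?case by simp
next
  case (step i)
  have "spow A (Suc i) = ssum A (spow A i)" by simp
  also have "\<dots> = ssum A (spow A j)" using step.IH by simp
  also have "\<dots> = spow A j" using assms(1) by simp
  finally show ?case .
qed

lemma summable_pow_div:
  fixes \<rho> :: real
  assumes "0 \<le> \<rho>" "\<rho> < 1" "1 \<le> D"
  shows "summable (\<lambda>k. \<rho> ^ (k div D))"
proof -
  define \<rho>1 where "\<rho>1 = (1 + \<rho>) / 2"
  have r1: "0 < \<rho>1" "\<rho>1 < 1" "\<rho> \<le> \<rho>1" using assms unfolding \<rho>1_def by auto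
  define \<theta> where "\<theta> = root D \<rho>1"
  have Dpos: "0 < D" using assms by simp
  have th: "0 < \<theta>" "\<theta> < 1" unfolding \<theta>_def using r1 Dpos by (auto simp: real_root_lt_1_iff)
  have thD: "\<theta> ^ D = \<rho>1" unfolding \<theta>_def using r1 Dpos by (simp add: real_root_pow_pos2)
  have bound: "norm (\<rho> ^ (k div D)) \<le> \<theta> ^ k / \<rho>1" for k
  proof -
    have "norm (\<rho> ^ (k div D)) = \<rho> ^ (k div D)" using assms by simp
    also have "\<dots> \<le> \<rho>1 ^ (k div D)" by (rule power_mono) (use assms r1 in auto)
    also have "\<dots> = (\<rho>1 ^ (k div D) * \<rho>1) / \<rho>1" using r1 by simp
    also have "\<dots> \<le> (\<rho>1 ^ (k div D) * \<theta> ^ (k mod D)) / \<rho>1"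
    proof -
      have "\<theta> ^ D \<le> \<theta> ^ (k mod D)"
        by (rule power_decreasing) (use th Dpos in \<open>auto intro: less_imp_le\<close>)
      then have "\<rho>1 \<le> \<theta> ^ (k mod D)" using thD by simp
      then show ?thesis using r1 by (intro divide_right_mono mult_left_mono) auto
    qed
    also have "\<rho>1 ^ (k div D) * \<theta> ^ (k mod D) = \<theta> ^ k"
    proof -
      have "\<theta> ^ k = \<theta> ^ (D * (k div D) + k mod D)" by simp
      also have "\<dots> = (\<theta> ^ D) ^ (k div D) * \<theta> ^ (k mod D)" by (simp only: power_add power_mult)
      finally show ?thesis using thD by simp
    qed
    finally show ?thesis .
  qed
  have "summable (\<lambda>k. \<theta> ^ k / \<rho>1)"
    using th by (intro summable_divide summable_geometric) simp
  then show ?thesis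
    by (rule summable_comparison_test[rotated]) (use bound in blast)
qed

lemma ga_mult_bilin:
  "ga_mult (\<lambda>g. p * f1 g + f2 g) (\<lambda>g. q * g1 g + g2 g) h =
     p * q * ga_mult f1 g1 h + p * ga_mult f1 g2 h + q * ga_mult f2 g1 h + ga_mult f2 g2 h"
  by (simp add: ga_mult_def algebra_simps sum.distrib sum_distrib_left)

context walk
begin

abbreviation "y \<equiv> ga_pow x nn"
abbreviation "T \<equiv> spow S nn"

lemma T0: "0 \<in> T" using n_val Supp_xpow[of nn] by (auto simp: Supp_def)

lemma Supp_pow_K: "Supp u \<subseteq> K \<Longrightarrow> Supp (ga_pow u j) \<subseteq> K"
proof (induction j)
  case 0 then show ?case using K0 by (simp add: Supp_unit)
next
  case (Suc j)
  have "Supp (ga_pow u (Suc j)) \<subseteq> ssum (Supp u) (Supp (ga_pow u j))"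
    by (simp add: Supp_mult_sub)
  also have "\<dots> \<subseteq> K" using Suc Kadd by (auto simp: ssum_def)
  finally show ?case .
qed

lemma K_in_spow: "\<exists>N\<ge>1. K \<subseteq> spow T N"
proof -
  obtain j where j: "spow T (Suc j) = spow T j" using spow_stab[OF T0] by blast
  define N where "N = Suc j"
  have eqN: "spow T N = spow T j" unfolding N_def by (rule j)
  have eq2: "spow T (N + N) = spow T j" by (rule spow_stab_all[OF j]) (simp add: N_def)
  have cl: "u + v \<in> spow T N" if "u \<in> spow T N" "v \<in> spow T N" for u v
    using spow_add[OF that] eq2 eqN by simp
  have z: "0 \<in> spow T N" using spow_mono[OF T0, of 0 N] by simp
  have ng: "- u \<in> spow T N" if "u \<in> spow T N" for u
    by (rule neg_in_closed[OF z cl that])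
  have "T \<subseteq> spow T 1"
  proof
    fix t assume "t \<in> T"
    then have "\<exists>a b. t = a + b \<and> a \<in> T \<and> b \<in> spow T 0" by (intro exI[of _ t] exI[of _ 0]) simp
    then show "t \<in> spow T 1" by (simp add: ssum_def)
  qed
  also have "\<dots> \<subseteq> spow T N" by (rule spow_mono[OF T0]) (simp add: N_def)
  finally have "T \<subseteq> spow T N" .
  then have "K \<subseteq> spow T N" unfolding K_def' by (rule gen_subgroup_min[OF _ z cl ng])
  moreover have "N \<ge> 1" unfolding N_def by simp
  ultimately show ?thesis by blast
qed

lemma conv_bound:
  "\<exists>\<rho> D. 0 \<le> \<rho> \<and> \<rho> < 1 \<and> 1 \<le> D \<and>
     (\<forall>k h. \<bar>ga_pow x k h - ga_mult c (ga_pow x (k mod nn)) h\<bar> \<le> \<rho> ^ (k div D))"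
proof -
  obtain N where N: "N \<ge> 1" "K \<subseteq> spow T N" using K_in_spow by blast
  define w where "w = ga_pow y N"
  have py: "prob y" by (rule prob_pow[OF px])
  have pw: "prob w" unfolding w_def by (rule prob_pow[OF py])
  have ynn: "\<And>g. y g \<ge> 0" using py by (simp add: prob_def)
  have Supp_y: "Supp y = T" by (rule Supp_xpow)
  have Supp_yK: "Supp y \<subseteq> K" using Supp_y SnK by simp
  have Supp_w: "Supp w = K"
  proof
    show "Supp w \<subseteq> K" unfolding w_def by (rule Supp_pow_K[OF Supp_yK])
    show "K \<subseteq> Supp w" unfolding w_def using Supp_pow[of y N, OF ynn] Supp_y N(2) by simp
  qed
  define d where "d = Min (w ` K)"
  have d_in: "d \<in> w ` K" unfolding d_def by (rule Min_in) (use KNE in auto)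
  have d_le: "d \<le> w g" if "g \<in> K" for g unfolding d_def by (rule Min_le) (use that in auto)
  have d_pos: "d > 0"
  proof -
    obtain g0 where g0: "g0 \<in> K" "d = w g0" using d_in by blast
    then have "w g0 \<noteq> 0" using Supp_w by (auto simp: Supp_def)
    moreover have "w g0 \<ge> 0" using pw by (simp add: prob_def)
    ultimately show ?thesis using g0 by simp
  qed
  define \<rho> where "\<rho> = 1 - d * real (card K)"
  define u where "u = (\<lambda>g. w g - d * real (card K) * c g)"
  have dc: "d * real (card K) * c g = (if g \<in> K then d else 0)" for g
    using cardK by (simp add: c_eq)
  have wK: "w g = 0" if "g \<notin> K" for g using that Supp_w by (auto simp: Supp_def)
  have u_nonneg: "u g \<ge> 0" for g
    unfolding u_def dc using d_le wK by auto
  have Supp_u: "Supp u \<subseteq> K"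
    unfolding u_def Supp_def using dc wK by auto
  have sum_u: "(\<Sum>g\<in>UNIV. u g) = \<rho>"
  proof -
    have "(\<Sum>g\<in>UNIV. u g) = (\<Sum>g\<in>UNIV. w g) - d * real (card K) * (\<Sum>g\<in>UNIV. c g)"
      unfolding u_def by (simp add: sum_subtractf sum_distrib_left)
    then show ?thesis using pw prob_c unfolding prob_def \<rho>_def by simp
  qed
  have rho_nonneg: "0 \<le> \<rho>" unfolding sum_u[symmetric] by (rule sum_nonneg) (use u_nonneg in auto)
  have rho_lt1: "\<rho> < 1" unfolding \<rho>_def using d_pos cardK by simp
  have w_eq: "w = (\<lambda>h. (1 - \<rho>) * c h + u h)"
    unfolding u_def \<rho>_def by (rule ext) (simp add: algebra_simps)
  have uj_nonneg: "ga_pow u j g \<ge> 0" for j g by (rule pow_nonneg) (rule u_nonneg)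
  have Supp_uj: "Supp (ga_pow u j) \<subseteq> K" for j by (rule Supp_pow_K[OF Supp_u])
  have sum_uj: "(\<Sum>g\<in>UNIV. ga_pow u j g) = \<rho> ^ j" for j
    by (induction j) (simp_all add: ga_mult_sum sum_u prob_unit[unfolded prob_def])
  have cc: "ga_mult c c h = c h" for h
    using c_mult_left[of c] Supp_c prob_c by (simp add: prob_def)
  have cu: "ga_mult c (ga_pow u j) h = \<rho> ^ j * c h" for j h
    using c_mult_left[OF Supp_uj[of j]] sum_uj by simp
  have uc: "ga_mult u c h = \<rho> * c h" for h
    using c_mult_right[OF Supp_u] sum_u by simp
  have wpow: "ga_pow w j h = (1 - \<rho> ^ j) * c h + ga_pow u j h" for j h
  proof (induction j arbitrary: h)
    case 0 then show ?case by simp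
  next
    case (Suc j)
    have IH: "ga_pow w j = (\<lambda>h. (1 - \<rho> ^ j) * c h + ga_pow u j h)" using Suc.IH by (rule ext)
    have "ga_pow w (Suc j) h = ga_mult (\<lambda>h. (1 - \<rho>) * c h + u h) (\<lambda>h. (1 - \<rho> ^ j) * c h + ga_pow u j h) h"
      by (simp add: IH w_eq[symmetric])
    also have "\<dots> = (1 - \<rho>) * (1 - \<rho> ^ j) * c h + (1 - \<rho>) * (\<rho> ^ j * c h)
        + (1 - \<rho> ^ j) * (\<rho> * c h) + ga_pow u (Suc j) h"
      by (simp add: ga_mult_bilin cc cu uc)
    also have "\<dots> = (1 - \<rho> ^ Suc j) * c h + ga_pow u (Suc j) h"
      by (simp add: algebra_simps)
    finally show ?case .
  qed
  have wbound: "\<bar>ga_pow w j h - c h\<bar> \<le> \<rho> ^ j" for j h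
  proof -
    have a1: "ga_pow u j h \<le> \<rho> ^ j"
      unfolding sum_uj[of j, symmetric] by (rule member_le_sum) (use uj_nonneg in auto)
    have a2: "c h \<le> 1" by (rule prob_le1[OF prob_c])
    have a3: "0 \<le> c h" using prob_c by (simp add: prob_def)
    have a4: "0 \<le> \<rho> ^ j" using rho_nonneg by simp
    have a5: "\<rho> ^ j * c h \<le> \<rho> ^ j" using a2 a4 by (simp add: mult_left_le)
    have a6: "0 \<le> \<rho> ^ j * c h" using a3 a4 by simp
    have "ga_pow w j h - c h = ga_pow u j h - \<rho> ^ j * c h" by (simp add: wpow algebra_simps)
    then show ?thesis using a1 a5 a6 uj_nonneg[of j h] by (simp add: abs_le_iff)
  qed
  have ybound: "\<bar>ga_pow y q h - c h\<bar> \<le> \<rho> ^ (q div N)" for q h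
  proof -
    have "ga_pow y q = ga_pow y (N * (q div N) + q mod N)" by simp
    also have "\<dots> = ga_mult (ga_pow w (q div N)) (ga_pow y (q mod N))"
      by (simp only: ga_pow_add ga_pow_mult w_def)
    finally have e1: "ga_pow y q = ga_mult (ga_pow w (q div N)) (ga_pow y (q mod N))" .
    have pyi: "prob (ga_pow y (q mod N))" by (rule prob_pow[OF py])
    have e2: "ga_mult c (ga_pow y (q mod N)) = c"
      using c_mult_left[OF Supp_pow_K[OF Supp_yK]] pyi by (simp add: prob_def)
    have "ga_pow y q h - c h = ga_mult (ga_pow w (q div N) - c) (ga_pow y (q mod N)) h"
      by (subst e2[symmetric]) (simp add: e1 ga_mult_diff_left)
    also have "\<bar>\<dots>\<bar> \<le> \<rho> ^ (q div N)"
      by (rule bound_mult_prob[OF _ pyi]) (simp add: wbound)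
    finally show ?thesis .
  qed
  have xbound: "\<bar>ga_pow x k h - ga_mult c (ga_pow x (k mod nn)) h\<bar> \<le> \<rho> ^ (k div (nn * N))" for k h
  proof -
    have "ga_pow x k = ga_pow x (nn * (k div nn) + k mod nn)" by simp
    also have "\<dots> = ga_mult (ga_pow y (k div nn)) (ga_pow x (k mod nn))"
      by (simp only: ga_pow_add ga_pow_mult)
    finally have e1: "ga_pow x k = ga_mult (ga_pow y (k div nn)) (ga_pow x (k mod nn))" .
    have pxr: "prob (ga_pow x (k mod nn))" by (rule prob_pow[OF px])
    have "ga_pow x k h - ga_mult c (ga_pow x (k mod nn)) h
        = ga_mult (ga_pow y (k div nn) - c) (ga_pow x (k mod nn)) h"
      by (simp add: e1 ga_mult_diff_left)
    also have "\<bar>\<dots>\<bar> \<le> \<rho> ^ (k div nn div N)"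
      by (rule bound_mult_prob[OF _ pxr]) (simp add: ybound)
    also have "k div nn div N = k div (nn * N)" by (simp add: div_mult2_eq)
    finally show ?thesis .
  qed
  have "1 \<le> nn * N" using n_pos N(1) by simp
  then show ?thesis using rho_nonneg rho_lt1 xbound by blast
qed

end

lemma fun_tendsto_iff:
  fixes F :: "nat \<Rightarrow> 'a \<Rightarrow> real"
  shows "(F \<longlonglongrightarrow> L) \<longleftrightarrow> (\<forall>h. (\<lambda>n. F n h) \<longlonglongrightarrow> L h)"
proof -
  have "(F \<longlonglongrightarrow> L) \<longleftrightarrow> limitin (product_topology (\<lambda>_. euclidean) UNIV) F L sequentially"
    by (simp add: euclidean_product_topology)
  also have "\<dots> \<longleftrightarrow> (\<forall>h. (\<lambda>n. F n h) \<longlonglongrightarrow> L h)"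
    by (simp add: limitin_componentwise)
  finally show ?thesis .
qed

lemma fun_convergent_iff:
  fixes F :: "nat \<Rightarrow> 'a \<Rightarrow> real"
  shows "convergent F \<longleftrightarrow> (\<forall>h. convergent (\<lambda>n. F n h))"
  unfolding convergent_def fun_tendsto_iff by metis

lemma term_le_suminf:
  fixes f :: "nat \<Rightarrow> real"
  assumes "summable f" "\<And>n. f n \<ge> 0"
  shows "f k \<le> suminf f"
  using sum_le_suminf[OF assms(1), of "{k}"] assms(2) by simp

lemma regroup_mod:
  fixes f g :: "nat \<Rightarrow> real"
  assumes sf: "summable (\<lambda>k. \<bar>f k\<bar>)" and m: "m \<ge> 1"
  shows "(\<Sum>k. f k * g (k mod m)) = (\<Sum>r<m. g r * (\<Sum>j. f (j * m + r)))"
proof -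
  define F where "F r k = (if k mod m = r then f k else 0) * g r" for r k
  have eq1: "f k * g (k mod m) = (\<Sum>r<m. F r k)" for k
  proof -
    have "k mod m < m" using m by simp
    then have "(\<Sum>r<m. F r k) = F (k mod m) k"
      unfolding F_def by (subst sum.remove[of _ "k mod m"]) (auto intro: sum.neutral)
    then show ?thesis by (simp add: F_def)
  qed
  have sF: "summable (F r)" for r
  proof -
    have "summable (\<lambda>k. \<bar>f k\<bar> * \<bar>g r\<bar>)" by (rule summable_mult2[OF sf])
    then show ?thesis
      by (rule summable_comparison_test[rotated]) (auto simp: F_def abs_mult)
  qed
  have eq2: "(\<Sum>k. F r k) = g r * (\<Sum>j. f (j * m + r))" if r: "r < m" for r
  proof -
    define f' where "f' k = (if k mod m = r then f k else 0)" for k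
    have sm: "strict_mono (\<lambda>j. j * m + r)" using m by (intro strict_monoI) simp
    have z: "f' k = 0" if "k \<notin> range (\<lambda>j. j * m + r)" for k
    proof -
      have "k mod m \<noteq> r"
      proof
        assume "k mod m = r"
        then have "k = (k div m) * m + r" by (metis div_mult_mod_eq)
        then show False using that by blast
      qed
      then show ?thesis by (simp add: f'_def)
    qed
    have "(\<Sum>j. f' (j * m + r)) = suminf f'" by (rule suminf_mono_reindex[OF sm z])
    moreover have "(\<lambda>j. f' (j * m + r)) = (\<lambda>j. f (j * m + r))"
      using r by (simp add: f'_def)
    moreover have "(\<Sum>k. F r k) = suminf f' * g r"
    proof -
      have "summable f'"
        using sf by (rule summable_comparison_test[rotated]) (auto simp: f'_def)
      then show ?thesis unfolding F_def f'_def[symmetric] by (simp add: suminf_mult2)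
    qed
    ultimately show ?thesis by simp
  qed
  have "(\<Sum>k. f k * g (k mod m)) = (\<Sum>k. \<Sum>r<m. F r k)" by (simp add: eq1)
  also have "\<dots> = (\<Sum>r<m. \<Sum>k. F r k)" by (rule suminf_sum) (rule sF)
  also have "\<dots> = (\<Sum>r<m. g r * (\<Sum>j. f (j * m + r)))" by (rule sum.cong) (simp_all add: eq2)
  finally show ?thesis .
qed

context walk2
begin

definition E where
  "E k h = ga_pow x k h - ga_mult c (ga_pow x (k mod mm)) h"

lemma L_nonneg: "ga_mult c (ga_pow x r) h \<ge> 0"
  by (rule ga_mult_nonneg) (simp_all add: c_nonneg pow_nonneg x_nonneg)

lemma L_le1: "ga_mult c (ga_pow x r) h \<le> 1"
  by (rule prob_le1) (rule prob_mult[OF prob_c prob_pow[OF px]])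

lemma L_abs_le1: "\<bar>ga_mult c (ga_pow x r) h\<bar> \<le> 1"
  using L_nonneg[of r h] L_le1[of r h] by simp

lemma E_props: "\<exists>\<rho> D. 0 \<le> \<rho> \<and> \<rho> < 1 \<and> 1 \<le> D \<and> (\<forall>k h. \<bar>E k h\<bar> \<le> \<rho> ^ (k div D))"
  using conv_bound m_eq_n unfolding E_def by simp

lemma E_summ: "summable (\<lambda>k. \<bar>E k h\<bar>)"
proof -
  obtain \<rho> D where r: "0 \<le> \<rho>" "\<rho> < 1" "1 \<le> D" "\<And>k h. \<bar>E k h\<bar> \<le> \<rho> ^ (k div D)"
    using E_props by blast
  show ?thesis
    by (rule summable_comparison_test[rotated, OF summable_pow_div[OF r(1-3)]]) (use r(4) in auto)
qed

lemma E_le1: "\<bar>E k h\<bar> \<le> 1"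
proof -
  obtain \<rho> D where r: "0 \<le> \<rho>" "\<rho> < 1" "1 \<le> D" "\<And>k h. \<bar>E k h\<bar> \<le> \<rho> ^ (k div D)"
    using E_props by blast
  have "\<rho> ^ (k div D) \<le> 1" using r by (simp add: power_le_one)
  then show ?thesis using r(4)[of k h] by simp
qed

lemma notK:
  assumes "1 \<le> r" "r < mm" "b \<in> spow S r" shows "b \<notin> K"
proof
  assume "b \<in> K"
  then have "b + 0 \<in> ssum K (spow S 0)" unfolding ssum_def by auto
  moreover have "0 + b \<in> ssum K (spow S r)" unfolding ssum_def using assms(3) K0 by blast
  ultimately show False using disjoint[of 0 r] assms m_eq_n by auto
qed

lemma L_zero_off:
  assumes "r < mm" "r' < mm" "r \<noteq> r'" "b \<in> spow S r"
  shows "ga_mult c (ga_pow x r') b = 0"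
proof (rule ccontr)
  assume "ga_mult c (ga_pow x r') b \<noteq> 0"
  then have "b \<in> ssum K (spow S r')" using Supp_cxr[of r'] by (auto simp: Supp_def)
  moreover have "0 + b \<in> ssum K (spow S r)" unfolding ssum_def using assms(4) K0 by blast
  ultimately show False using disjoint[of r r'] disjoint[of r' r] assms m_eq_n
    by (cases "r < r'") auto
qed

lemma L_pos:
  assumes "b \<in> spow S r" shows "ga_mult c (ga_pow x r) b > 0"
proof -
  have "0 + b \<in> ssum K (spow S r)" unfolding ssum_def using assms K0 by blast
  then have "ga_mult c (ga_pow x r) b \<noteq> 0" using Supp_cxr[of r] by (auto simp: Supp_def)
  then show ?thesis using L_nonneg[of r b] by simp
qed

lemma c_in_K: "g \<in> K \<Longrightarrow> c g = c 0" using K0 by (simp add: c_eq)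

end

locale walk3 = walk2 +
  fixes a :: "nat \<Rightarrow> nat \<Rightarrow> real"
  assumes abs_summ: "\<And>n. summable (\<lambda>k. \<bar>a n k\<bar>)"
    and sup_lim: "(\<lambda>n. SUP k\<in>{1..}. \<bar>a n k\<bar>) \<longlonglongrightarrow> 0"
begin

definition "sg n = (SUP k\<in>{1..}. \<bar>a n k\<bar>)"
definition "ss n r = (\<Sum>j. a n (j * mm + r))"
definition "M n h = (\<Sum>r<mm. ga_mult c (ga_pow x r) h * ss n r) + (ga_unit h - c h) * a n 0"
definition "err n h = (\<Sum>k. a n (Suc k) * E (Suc k) h)"

lemma a_le_sg: "1 \<le> k \<Longrightarrow> \<bar>a n k\<bar> \<le> sg n"
  unfolding sg_def
  by (rule cSUP_upper) (auto intro!: bdd_aboveI2 term_le_suminf[OF abs_summ])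

lemma decomp: "pser_eval (a n) x h = M n h + err n h"
proof -
  define L where "L k = ga_mult c (ga_pow x (k mod mm)) h" for k
  have sa: "summable (\<lambda>k. \<bar>a n k\<bar>)" by (rule abs_summ)
  have sL: "summable (\<lambda>k. a n k * L k)"
    by (rule summable_comparison_test[rotated, OF sa])
       (auto simp: L_def abs_mult intro!: mult_left_le L_abs_le1)
  have sL1: "summable (\<lambda>k. a n (Suc k) * L (Suc k))"
    using sL by (subst summable_Suc_iff)
  have sE: "summable (\<lambda>k. a n k * E k h)"
    by (rule summable_comparison_test[rotated, OF sa])
       (auto simp: abs_mult intro!: mult_left_le E_le1)
  have sE1: "summable (\<lambda>k. a n (Suc k) * E (Suc k) h)"
    using sE by (subst summable_Suc_iff)
  have xe: "ga_pow x k h = L k + E k h" for k by (simp add: E_def L_def)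
  have "(\<Sum>k. a n (Suc k) * ga_pow x (Suc k) h)
      = (\<Sum>k. a n (Suc k) * L (Suc k) + a n (Suc k) * E (Suc k) h)"
    by (simp only: xe distrib_left)
  also have "\<dots> = (\<Sum>k. a n (Suc k) * L (Suc k)) + err n h"
    unfolding err_def by (rule suminf_add[OF sL1 sE1, symmetric])
  also have "(\<Sum>k. a n (Suc k) * L (Suc k)) = (\<Sum>k. a n k * L k) - a n 0 * L 0"
    by (rule suminf_split_head[OF sL])
  also have "L 0 = c h" by (simp add: L_def)
  also have "(\<Sum>k. a n k * L k) = (\<Sum>r<mm. ga_mult c (ga_pow x r) h * ss n r)"
    unfolding L_def ss_def by (rule regroup_mod[OF sa m_pos])
  finally have "(\<Sum>k. a n (Suc k) * ga_pow x (Suc k) h)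
     = (\<Sum>r<mm. ga_mult c (ga_pow x r) h * ss n r) - a n 0 * c h + err n h" .
  then show ?thesis unfolding pser_eval_def M_def by (simp add: algebra_simps)
qed

lemma err_lim: "(\<lambda>n. err n h) \<longlonglongrightarrow> 0"
proof (rule Lim_null_comparison)
  define B where "B = (\<Sum>k. \<bar>E (Suc k) h\<bar>)"
  have sB: "summable (\<lambda>k. \<bar>E (Suc k) h\<bar>)" using E_summ by (subst summable_Suc_iff)
  show "\<forall>\<^sub>F n in sequentially. norm (err n h) \<le> sg n * B"
  proof (rule always_eventually, rule allI)
    fix n
    have sa1: "summable (\<lambda>k. \<bar>a n (Suc k)\<bar>)" using abs_summ[of n] by (subst summable_Suc_iff)
    have sabs: "summable (\<lambda>k. \<bar>a n (Suc k) * E (Suc k) h\<bar>)"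
      by (rule summable_comparison_test[rotated, OF sa1])
         (auto simp: abs_mult intro!: mult_left_le E_le1)
    have "norm (err n h) \<le> (\<Sum>k. \<bar>a n (Suc k) * E (Suc k) h\<bar>)"
      unfolding err_def real_norm_def by (rule summable_rabs[OF sabs])
    also have "\<dots> \<le> (\<Sum>k. sg n * \<bar>E (Suc k) h\<bar>)"
    proof (rule suminf_le[OF _ sabs summable_mult[OF sB]])
      fix k
      show "\<bar>a n (Suc k) * E (Suc k) h\<bar> \<le> sg n * \<bar>E (Suc k) h\<bar>"
        unfolding abs_mult by (rule mult_right_mono) (simp_all add: a_le_sg)
    qed
    also have "\<dots> = sg n * B" unfolding B_def by (rule suminf_mult[OF sB])
    finally show "norm (err n h) \<le> sg n * B" .
  qed
  show "(\<lambda>n. sg n * B) \<longlonglongrightarrow> 0"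
    using sup_lim unfolding sg_def[symmetric] by (rule tendsto_mult_left_zero)
qed

lemma conv_PM: "convergent (\<lambda>n. pser_eval (a n) x h) \<longleftrightarrow> convergent (\<lambda>n. M n h)"
proof -
  have ce: "convergent (\<lambda>n. err n h)" using err_lim by (rule convergentI)
  have P: "(\<lambda>n. pser_eval (a n) x h) = (\<lambda>n. M n h + err n h)" by (simp add: decomp)
  show ?thesis
  proof
    assume "convergent (\<lambda>n. pser_eval (a n) x h)"
    then have "convergent (\<lambda>n. (M n h + err n h) - err n h)" unfolding P by (rule convergent_diff[OF _ ce])
    then show "convergent (\<lambda>n. M n h)" by simp
  next
    assume "convergent (\<lambda>n. M n h)"
    then show "convergent (\<lambda>n. pser_eval (a n) x h)" unfolding P by (rule convergent_add[OF _ ce])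
  qed
qed

lemma lim_PM: "(\<lambda>n. M n h) \<longlonglongrightarrow> l \<Longrightarrow> (\<lambda>n. pser_eval (a n) x h) \<longlonglongrightarrow> l"
  using tendsto_add[of "\<lambda>n. M n h" l sequentially "\<lambda>n. err n h" 0] err_lim
  by (simp add: decomp)

lemma M_at_b:
  assumes "1 \<le> r" "r < mm" "b \<in> spow S r"
  shows "M n b = ga_mult c (ga_pow x r) b * ss n r"
proof -
  have bK: "b \<notin> K" by (rule notK[OF assms])
  then have b0: "b \<noteq> 0" using K0 by auto
  have "(\<Sum>r'<mm. ga_mult c (ga_pow x r') b * ss n r') = ga_mult c (ga_pow x r) b * ss n r"
    using assms(2) by (subst sum.remove[of _ r]) (auto intro!: sum.neutral simp: L_zero_off[OF assms(2) _ _ assms(3)])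
  moreover have "ga_unit b - c b = 0" using bK b0 by (simp add: ga_unit_def c_eq)
  ultimately show ?thesis unfolding M_def by simp
qed

lemma M_at_0: "M n 0 = c 0 * ss n 0 + (1 - c 0) * a n 0"
proof -
  have z: "0 \<in> spow S 0" by simp
  have "(\<Sum>r'<mm. ga_mult c (ga_pow x r') 0 * ss n r') = ga_mult c (ga_pow x 0) 0 * ss n 0"
    using m_pos by (subst sum.remove[of _ 0]) (auto intro!: sum.neutral simp: L_zero_off[OF _ _ _ z])
  moreover have "ga_mult c (ga_pow x 0) 0 = c 0" by simp
  ultimately have "(\<Sum>r'<mm. ga_mult c (ga_pow x r') 0 * ss n r') = c 0 * ss n 0" by simp
  then show ?thesis unfolding M_def by (simp add: ga_unit_def)
qed

lemma M_diff:
  assumes "k \<in> K" "k \<noteq> 0"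
  shows "M n 0 - M n k = a n 0"
proof -
  have "ga_mult c (ga_pow x r) k = ga_mult c (ga_pow x r) 0" for r
    using c_left_inv[OF assms(1), of "ga_pow x r" 0] by simp
  moreover have "c k = c 0" by (rule c_in_K[OF assms(1)])
  ultimately show ?thesis using assms(2) unfolding M_def by (simp add: ga_unit_def algebra_simps)
qed

end

lemma convergent_cmult: "convergent (f :: nat \<Rightarrow> real) \<Longrightarrow> convergent (\<lambda>n. d * f n)"
  unfolding convergent_def by (blast intro: tendsto_mult_left)

context walk3
begin

lemma fwd_a0:
  assumes "c \<noteq> ga_unit" "\<forall>h. convergent (\<lambda>n. M n h)"
  shows "convergent (\<lambda>n. a n 0)"
proof -
  have "K \<noteq> {0}" using assms(1) c_unit_iff by blast
  then obtain k where k: "k \<in> K" "k \<noteq> 0" using K0 by blast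
  have "convergent (\<lambda>n. M n 0 - M n k)"
    by (rule convergent_diff) (use assms(2) in blast)+
  then show ?thesis using M_diff[OF k] by simp
qed

lemma c0_pos: "c 0 > 0" using K0 cardK by (simp add: c_eq)

lemma fwd_s:
  assumes "c = ga_unit \<or> convergent (\<lambda>n. a n 0)" "\<forall>h. convergent (\<lambda>n. M n h)" "r < mm"
  shows "convergent (\<lambda>n. ss n r)"
proof (cases "r = 0")
  case True
  have t: "convergent (\<lambda>n. (1 - c 0) * a n 0)"
  proof (cases "c = ga_unit")
    case True
    then have "(1 - c 0) = 0" by (simp add: ga_unit_def)
    then show ?thesis by (simp add: convergent_const)
  next
    case False then show ?thesis using assms(1) by (simp add: convergent_cmult)
  qed
  have "convergent (\<lambda>n. M n 0 - (1 - c 0) * a n 0)"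
    by (rule convergent_diff) (use assms(2) t in blast)+
  then have "convergent (\<lambda>n. (1 / c 0) * (M n 0 - (1 - c 0) * a n 0))" by (rule convergent_cmult)
  moreover have "(1 / c 0) * (M n 0 - (1 - c 0) * a n 0) = ss n 0" for n
    using c0_pos by (simp add: M_at_0 field_simps)
  ultimately show ?thesis using True by simp
next
  case False
  then have r1: "1 \<le> r" by simp
  obtain b where b: "b \<in> spow S r" using spow_nonempty[OF S_ne, of r] by blast
  have pos: "ga_mult c (ga_pow x r) b > 0" by (rule L_pos[OF b])
  have "convergent (\<lambda>n. M n b)" using assms(2) by blast
  then have "convergent (\<lambda>n. (1 / ga_mult c (ga_pow x r) b) * M n b)" by (rule convergent_cmult)
  moreover have "(1 / ga_mult c (ga_pow x r) b) * M n b = ss n r" for n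
    using pos by (simp add: M_at_b[OF r1 assms(3) b])
  ultimately show ?thesis by simp
qed

lemma bwd:
  assumes "c = ga_unit \<or> convergent (\<lambda>n. a n 0)" "\<forall>r<mm. convergent (\<lambda>n. ss n r)"
  shows "(\<lambda>n. M n h) \<longlonglongrightarrow> (\<Sum>r<mm. ga_mult c (ga_pow x r) h * lim (\<lambda>n. ss n r)) + (ga_unit h - c h) * lim (\<lambda>n. a n 0)"
proof -
  have t1: "(\<lambda>n. \<Sum>r<mm. ga_mult c (ga_pow x r) h * ss n r) \<longlonglongrightarrow> (\<Sum>r<mm. ga_mult c (ga_pow x r) h * lim (\<lambda>n. ss n r))"
    by (rule tendsto_sum, rule tendsto_mult_left) (use assms(2) in \<open>simp add: convergent_LIMSEQ_iff\<close>)
  have t2: "(\<lambda>n. (ga_unit h - c h) * a n 0) \<longlonglongrightarrow> (ga_unit h - c h) * lim (\<lambda>n. a n 0)"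
  proof (cases "c = ga_unit")
    case True then show ?thesis by simp
  next
    case False then show ?thesis using assms(1)
      by (intro tendsto_mult_left) (simp add: convergent_LIMSEQ_iff)
  qed
  show ?thesis unfolding M_def by (rule tendsto_add[OF t1 t2])
qed

end

theorem theorem2:
  fixes a :: "nat \<Rightarrow> nat \<Rightarrow> real"
    and x :: "'g::{group_add,finite} \<Rightarrow> real"
  assumes abs_summ: "\<And>n. summable (\<lambda>k. \<bar>a n k\<bar>)"
    and sup_lim: "(\<lambda>n. SUP k\<in>{1..}. \<bar>a n k\<bar>) \<longlonglongrightarrow> 0"
    and xS: "x \<in> simplex_S"
    and nx: "n_of (ga_mult x (c_of x)) = n_of x"
  shows "(c_of x \<noteq> ga_unit \<longrightarrow>
            (convergent (\<lambda>n. pser_eval (a n) x) \<longleftrightarrow>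
              convergent (\<lambda>n. a n 0) \<and>
              (\<forall>r<m_of x. convergent (\<lambda>n. \<Sum>k. a n (k * m_of x + r)))))
       \<and> (c_of x = ga_unit \<longrightarrow>
            (convergent (\<lambda>n. pser_eval (a n) x) \<longleftrightarrow>
              (\<forall>r<m_of x. convergent (\<lambda>n. \<Sum>k. a n (k * m_of x + r)))))
       \<and> (convergent (\<lambda>n. pser_eval (a n) x) \<longrightarrow>
            (\<lambda>n. pser_eval (a n) x) \<longlonglongrightarrow>
              (\<lambda>h. ga_mult (c_of x)
                     (\<lambda>g. \<Sum>r<m_of x. ga_pow x r g * lim (\<lambda>n. \<Sum>k. a n (k * m_of x + r))) h
                   + (ga_unit h - c_of x h) * lim (\<lambda>n. a n 0)))"
proof -
  have px: "prob x" using xS by (simp add: simplex_S_def prob_def)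
  interpret w: walk3 x a
    by unfold_locales (use px nx abs_summ sup_lim in auto)
  have ss: "(\<lambda>n. \<Sum>k. a n (k * m_of x + r)) = (\<lambda>n. w.ss n r)" for r
    by (simp add: w.ss_def)
  have convP: "convergent (\<lambda>n. pser_eval (a n) x) \<longleftrightarrow> (\<forall>h. convergent (\<lambda>n. w.M n h))"
    by (simp add: fun_convergent_iff w.conv_PM)
  define A where "A = (\<forall>r<m_of x. convergent (\<lambda>n. w.ss n r))"
  have fwd: "(c_of x \<noteq> ga_unit \<longrightarrow> convergent (\<lambda>n. a n 0)) \<and> A"
    if "convergent (\<lambda>n. pser_eval (a n) x)"
  proof -
    have M: "\<forall>h. convergent (\<lambda>n. w.M n h)" using that convP by blast
    have a0: "c_of x \<noteq> ga_unit \<longrightarrow> convergent (\<lambda>n. a n 0)" using w.fwd_a0 M by blast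
    then have "c_of x = ga_unit \<or> convergent (\<lambda>n. a n 0)" by blast
    then have A unfolding A_def using w.fwd_s M by blast
    with a0 show ?thesis by blast
  qed
  have bwd: "(\<lambda>n. pser_eval (a n) x) \<longlonglongrightarrow>
      (\<lambda>h. (\<Sum>r<m_of x. ga_mult (c_of x) (ga_pow x r) h * lim (\<lambda>n. w.ss n r)) + (ga_unit h - c_of x h) * lim (\<lambda>n. a n 0))"
    if "c_of x = ga_unit \<or> convergent (\<lambda>n. a n 0)" A
    unfolding fun_tendsto_iff
  proof
    fix h
    show "(\<lambda>n. pser_eval (a n) x h) \<longlonglongrightarrow> (\<Sum>r<m_of x. ga_mult (c_of x) (ga_pow x r) h * lim (\<lambda>n. w.ss n r)) + (ga_unit h - c_of x h) * lim (\<lambda>n. a n 0)"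
      by (rule w.lim_PM, rule w.bwd) (use that in \<open>auto simp: A_def\<close>)
  qed
  have tgt: "(\<lambda>h. ga_mult (c_of x)
                     (\<lambda>g. \<Sum>r<m_of x. ga_pow x r g * lim (\<lambda>n. w.ss n r)) h
                   + (ga_unit h - c_of x h) * lim (\<lambda>n. a n 0))
     = (\<lambda>h. (\<Sum>r<m_of x. ga_mult (c_of x) (ga_pow x r) h * lim (\<lambda>n. w.ss n r)) + (ga_unit h - c_of x h) * lim (\<lambda>n. a n 0))"
    by (simp add: ga_mult_sum_right)
  have c1: "convergent (\<lambda>n. pser_eval (a n) x)" if "c_of x = ga_unit \<or> convergent (\<lambda>n. a n 0)" A
    using bwd[OF that] by (rule convergentI)
  show ?thesis
    unfolding ss A_def[symmetric] tgt
    using fwd c1 bwd by blast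
qed

end
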